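(* Let $(Q,Z)$ be a locally gentle pair and let $v$ be a relational vertex of $Q$. Let $(Q^{v},Z^{v})$ be the levee of $(Q,Z)$ at $v$, with new vertices $v(\sharp),v(\flat)$. Then: (i) the pair $(Q^{v},Z^{v})$ is locally gentle; (ii) for the pair $(Q^{v},Z^{v})$, the vertices $v(\sharp)$ and $v(\flat)$ are not relational.
   Context: A quiver $Q$ has vertex set $Q_0$, arrow set $Q_1$, head and tail maps $h,t\colon Q_1\to Q_0$ (so $a\colon t(a)\to h(a)$). A non-trivial path is $a_1\cdots a_n$ with $t(a_i)=h(a_{i+1})$. $Z$ is a set of paths of length $2$ ("zero-relations"); a path is admissible if no element of $Z$ occurs as a subpath of it. The pair $(Q,Z)$ is locally gentle if (i) every vertex is the head of at most two arrows and the tail of at most two arrows, and (ii) for every arrow $b$ there is at most one admissible and at most one inadmissible length-$2$ path of the form $cb$, and likewise at most one admissible and at most one inadmissible length-$2$ path of the form $ba$. A vertex $v$ is relational if there is $ba\in Z$ with $t(b)=v=h(a)$. For a relational vertex $v$: let $b,a$ be arrows with $t(b)=v=h(a)$, $ba\in Z$; let $c$ be the other arrow with head $v$ (if it exists) and $d$ the other arrow with tail $v$ (if it exists); by local gentleness $bc\notin Z$, $da\notin Z$ and $dc\in Z$ whenever both $c,d$ exist. The levee $(Q^{v},Z^{v})$: vertices are $u^{v}$ for $u\in Q_0\setminus\{v\}$ together with two new distinct vertices $v(\sharp),v(\flat)$; arrows are $a'^{v}$ for $a'\in Q_1$. For an arrow $x$, $h^{v}(x^{v})=h(x)^{v}$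 if $h(x)\neq v$ and $t^{v}(x^{v})=t(x)^{v}$ if $t(x)\neq v$; otherwise $t^{v}(b^{v})=v(\sharp)=h^{v}(c^{v})$ and $t^{v}(d^{v})=v(\flat)=h^{v}(a^{v})$ (whenever these arrows exist; head and tail of a loop are assigned separately by these rules). The quiver $Q^v$ is defined up to isomorphism (swapping the roles of the labels). Finally $Z^{v}=\{m^{v}n^{v}: mn\in Z,\ t(m)\neq v\}$. *)

theory Defs
  imports Main
begin

text \<open>A quiver is given by a vertex set Q0, an arrow set Q1, and head/tail maps
  h, t (an arrow x goes from t x to h x). A length-2 path "b a" (b after a) is
  represented by the pair (b, a) with t b = h a.\<close>

definition is_path2 :: "'a set \<Rightarrow> ('a \<Rightarrow> 'v) \<Rightarrow> ('a \<Rightarrow> 'v) \<Rightarrow> 'a \<Rightarrow> 'a \<Rightarrow> bool" where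
  "is_path2 Q1 h t b a \<longleftrightarrow> b \<in> Q1 \<and> a \<in> Q1 \<and> t b = h a"

definition locally_gentle ::
  "'v set \<Rightarrow> 'a set \<Rightarrow> ('a \<Rightarrow> 'v) \<Rightarrow> ('a \<Rightarrow> 'v) \<Rightarrow> ('a \<times> 'a) set \<Rightarrow> bool" where
  "locally_gentle Q0 Q1 h t Z \<longleftrightarrow>
     (\<forall>x\<in>Q1. h x \<in> Q0 \<and> t x \<in> Q0) \<and>
     (\<forall>(b, a)\<in>Z. is_path2 Q1 h t b a) \<and>
     (\<forall>u\<in>Q0. finite {x\<in>Q1. h x = u} \<and> card {x\<in>Q1. h x = u} \<le> 2 \<and>
              finite {x\<in>Q1. t x = u} \<and> card {x\<in>Q1. t x = u} \<le> 2) \<and>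
     (\<forall>b\<in>Q1.
        (\<forall>c c'. is_path2 Q1 h t c b \<and> (c, b) \<notin> Z \<and> is_path2 Q1 h t c' b \<and> (c', b) \<notin> Z \<longrightarrow> c = c') \<and>
        (\<forall>c c'. (c, b) \<in> Z \<and> (c', b) \<in> Z \<longrightarrow> c = c') \<and>
        (\<forall>a a'. is_path2 Q1 h t b a \<and> (b, a) \<notin> Z \<and> is_path2 Q1 h t b a' \<and> (b, a') \<notin> Z \<longrightarrow> a = a') \<and>
        (\<forall>a a'. (b, a) \<in> Z \<and> (b, a') \<in> Z \<longrightarrow> a = a'))"

definition relational ::
  "'v set \<Rightarrow> 'a set \<Rightarrow> ('a \<Rightarrow> 'v) \<Rightarrow> ('a \<Rightarrow> 'v) \<Rightarrow> ('a \<times> 'a) set \<Rightarrow> 'v \<Rightarrow> bool" where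
  "relational Q0 Q1 h t Z v \<longleftrightarrow> v \<in> Q0 \<and> (\<exists>b a. (b, a) \<in> Z \<and> t b = v \<and> h a = v)"

text \<open>Vertices of the levee: old vertices u^v, plus the two new vertices v(sharp), v(flat).
  Arrows of the levee are identified with the arrows of Q (x^v is represented by x).\<close>

datatype 'v levee_vertex = Old 'v | Sharp | Flat

text \<open>The levee at v, relative to a chosen pair b a in Z with t b = v = h a.
  c is the other arrow with head v, d the other arrow with tail v.\<close>

definition levee_Q0 :: "'v set \<Rightarrow> 'v \<Rightarrow> 'v levee_vertex set" where
  "levee_Q0 Q0 v = Old ` (Q0 - {v}) \<union> {Sharp, Flat}"

definition levee_h :: "('a \<Rightarrow> 'v) \<Rightarrow> 'v \<Rightarrow> 'a \<Rightarrow> 'a \<Rightarrow> 'v levee_vertex" where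
  "levee_h h v a x = (if h x \<noteq> v then Old (h x) else if x = a then Flat else Sharp)"

definition levee_t :: "('a \<Rightarrow> 'v) \<Rightarrow> 'v \<Rightarrow> 'a \<Rightarrow> 'a \<Rightarrow> 'v levee_vertex" where
  "levee_t t v b x = (if t x \<noteq> v then Old (t x) else if x = b then Sharp else Flat)"

definition levee_Z :: "('a \<times> 'a) set \<Rightarrow> ('a \<Rightarrow> 'v) \<Rightarrow> 'v \<Rightarrow> ('a \<times> 'a) set" where
  "levee_Z Z t v = {(m, n) \<in> Z. t m \<noteq> v}"

end

theory Submission
  imports Defs
begin

lemma three_le_card:
  assumes "finite S" "card S \<le> 2" "x \<in> S" "y \<in> S" "z \<in> S" "x \<noteq> y" "x \<noteq> z"
  shows "y = z"
proof (rule ccontr)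
  assume "y \<noteq> z"
  then have "card {x, y, z} = 3" using assms by auto
  moreover have "card {x, y, z} \<le> card S" using assms by (intro card_mono) auto
  ultimately show False using assms by auto
qed

theorem lemma2p10:
  fixes Q0 :: "'v set" and Q1 :: "'a set" and h t :: "'a \<Rightarrow> 'v"
    and Z :: "('a \<times> 'a) set" and v :: 'v and a b :: 'a
  assumes "locally_gentle Q0 Q1 h t Z"
    and "relational Q0 Q1 h t Z v"
    and "(b, a) \<in> Z" and "t b = v" and "h a = v"
  shows "locally_gentle (levee_Q0 Q0 v) Q1 (levee_h h v a) (levee_t t v b) (levee_Z Z t v)
    \<and> \<not> relational (levee_Q0 Q0 v) Q1 (levee_h h v a) (levee_t t v b) (levee_Z Z t v) Sharp
    \<and> \<not> relational (levee_Q0 Q0 v) Q1 (levee_h h v a) (levee_t t v b) (levee_Z Z t v) Flat"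
proof -
  note LG = assms(1)[unfolded locally_gentle_def]
  have V: "\<And>x. x \<in> Q1 \<Longrightarrow> h x \<in> Q0 \<and> t x \<in> Q0" using LG by blast
  have ZP: "\<And>m n. (m, n) \<in> Z \<Longrightarrow> m \<in> Q1 \<and> n \<in> Q1 \<and> t m = h n"
    using LG unfolding is_path2_def by blast
  have CH: "\<And>u. u \<in> Q0 \<Longrightarrow> finite {x\<in>Q1. h x = u} \<and> card {x\<in>Q1. h x = u} \<le> 2"
    using LG by blast
  have CT: "\<And>u. u \<in> Q0 \<Longrightarrow> finite {x\<in>Q1. t x = u} \<and> card {x\<in>Q1. t x = u} \<le> 2"
    using LG by blast
  have G1: "\<And>b c c'. b \<in> Q1 \<Longrightarrow> is_path2 Q1 h t c b \<Longrightarrow> (c, b) \<notin> Z \<Longrightarrow> is_path2 Q1 h t c' b \<Longrightarrow> (c', b) \<notin> Z \<Longrightarrow> c = c'"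
    using LG by blast
  have G2: "\<And>b c c'. b \<in> Q1 \<Longrightarrow> (c, b) \<in> Z \<Longrightarrow> (c', b) \<in> Z \<Longrightarrow> c = c'"
    using LG by blast
  have G3: "\<And>b a a'. b \<in> Q1 \<Longrightarrow> is_path2 Q1 h t b a \<Longrightarrow> (b, a) \<notin> Z \<Longrightarrow> is_path2 Q1 h t b a' \<Longrightarrow> (b, a') \<notin> Z \<Longrightarrow> a = a'"
    using LG by blast
  have G4: "\<And>b a a'. b \<in> Q1 \<Longrightarrow> (b, a) \<in> Z \<Longrightarrow> (b, a') \<in> Z \<Longrightarrow> a = a'"
    using LG by blast
  have bQ: "b \<in> Q1" and aQ: "a \<in> Q1" using ZP[OF assms(3)] by auto
  have vQ: "v \<in> Q0" using V[OF bQ] assms(4) by auto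
  let ?h = "levee_h h v a" and ?t = "levee_t t v b" and ?Z = "levee_Z Z t v"
  have p1: "\<forall>x\<in>Q1. ?h x \<in> levee_Q0 Q0 v \<and> ?t x \<in> levee_Q0 Q0 v"
    using V by (auto simp: levee_Q0_def levee_h_def levee_t_def)
  have p2: "\<forall>(m, n)\<in>?Z. is_path2 Q1 ?h ?t m n"
    using ZP by (auto simp: levee_Z_def is_path2_def levee_h_def levee_t_def)
  have p3: "\<forall>u\<in>levee_Q0 Q0 v. finite {x\<in>Q1. ?h x = u} \<and> card {x\<in>Q1. ?h x = u} \<le> 2 \<and>
              finite {x\<in>Q1. ?t x = u} \<and> card {x\<in>Q1. ?t x = u} \<le> 2"
  proof
    fix u assume "u \<in> levee_Q0 Q0 v"
    then consider w where "u = Old w" "w \<in> Q0" "w \<noteq> v" | "u = Sharp" | "u = Flat"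
      by (auto simp: levee_Q0_def)
    then show "finite {x\<in>Q1. ?h x = u} \<and> card {x\<in>Q1. ?h x = u} \<le> 2 \<and>
              finite {x\<in>Q1. ?t x = u} \<and> card {x\<in>Q1. ?t x = u} \<le> 2"
    proof cases
      case 1
      have "{x\<in>Q1. ?h x = u} = {x\<in>Q1. h x = w}" "{x\<in>Q1. ?t x = u} = {x\<in>Q1. t x = w}"
        using 1 by (auto simp: levee_h_def levee_t_def)
      then show ?thesis using CH[OF 1(2)] CT[OF 1(2)] by simp
    next
      case 2
      have e1: "{x\<in>Q1. ?h x = u} \<subseteq> {x\<in>Q1. h x = v}" using 2 by (auto simp: levee_h_def split: if_splits)
      have e2: "{x\<in>Q1. ?t x = u} \<subseteq> {x\<in>Q1. t x = v}" using 2 by (auto simp: levee_t_def split: if_splits)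
      show ?thesis using CH[OF vQ] CT[OF vQ] e1 e2 by (meson card_mono finite_subset le_trans)
    next
      case 3
      have e1: "{x\<in>Q1. ?h x = u} \<subseteq> {x\<in>Q1. h x = v}" using 3 by (auto simp: levee_h_def split: if_splits)
      have e2: "{x\<in>Q1. ?t x = u} \<subseteq> {x\<in>Q1. t x = v}" using 3 by (auto simp: levee_t_def split: if_splits)
      show ?thesis using CH[OF vQ] CT[OF vQ] e1 e2 by (meson card_mono finite_subset le_trans)
    qed
  qed
  have p4: "\<forall>b'\<in>Q1.
        (\<forall>c c'. is_path2 Q1 ?h ?t c b' \<and> (c, b') \<notin> ?Z \<and> is_path2 Q1 ?h ?t c' b' \<and> (c', b') \<notin> ?Z \<longrightarrow> c = c') \<and>
        (\<forall>c c'. (c, b') \<in> ?Z \<and> (c', b') \<in> ?Z \<longrightarrow> c = c') \<and>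
        (\<forall>a a'. is_path2 Q1 ?h ?t b' a \<and> (b', a) \<notin> ?Z \<and> is_path2 Q1 ?h ?t b' a' \<and> (b', a') \<notin> ?Z \<longrightarrow> a = a') \<and>
        (\<forall>a a'. (b', a) \<in> ?Z \<and> (b', a') \<in> ?Z \<longrightarrow> a = a')"
  proof (intro ballI conjI allI impI)
    fix b' c c' assume b': "b' \<in> Q1" and
      H: "is_path2 Q1 ?h ?t c b' \<and> (c, b') \<notin> ?Z \<and> is_path2 Q1 ?h ?t c' b' \<and> (c', b') \<notin> ?Z"
    show "c = c'"
    proof (cases "h b' = v")
      case False
      then have "t c = h b'" "t c' = h b'" "t c \<noteq> v" "t c' \<noteq> v" "c \<in> Q1" "c' \<in> Q1"
        using H by (auto simp: is_path2_def levee_h_def levee_t_def split: if_splits)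
      then show ?thesis using H G1[OF b', of c c'] by (auto simp: is_path2_def levee_Z_def)
    next
      case True
      show ?thesis
      proof (cases "b' = a")
        case False
        then show ?thesis using H True by (auto simp: is_path2_def levee_h_def levee_t_def split: if_splits)
      next
        case True
        then have "t c = v" "t c' = v" "c \<noteq> b" "c' \<noteq> b" "c \<in> Q1" "c' \<in> Q1"
          using H \<open>h b' = v\<close> by (auto simp: is_path2_def levee_h_def levee_t_def split: if_splits)
        then show ?thesis using three_le_card[of "{x\<in>Q1. t x = v}" b c c'] CT[OF vQ] bQ assms(4) by auto
      qed
    qed
  next
    fix b' c c' assume b': "b' \<in> Q1" and "(c, b') \<in> ?Z \<and> (c', b') \<in> ?Z"
    then show "c = c'" using G2[OF b'] by (auto simp: levee_Z_def)
  next
    fix b' c c' assume b': "b' \<in> Q1" and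
      H: "is_path2 Q1 ?h ?t b' c \<and> (b', c) \<notin> ?Z \<and> is_path2 Q1 ?h ?t b' c' \<and> (b', c') \<notin> ?Z"
    show "c = c'"
    proof (cases "t b' = v")
      case False
      then have "h c = t b'" "h c' = t b'" "h c \<noteq> v" "h c' \<noteq> v" "c \<in> Q1" "c' \<in> Q1"
        using H by (auto simp: is_path2_def levee_h_def levee_t_def split: if_splits)
      then show ?thesis using H G3[OF b', of c c'] False by (auto simp: is_path2_def levee_Z_def)
    next
      case True
      show ?thesis
      proof (cases "b' = b")
        case False
        then show ?thesis using H True by (auto simp: is_path2_def levee_h_def levee_t_def split: if_splits)
      next
        case True
        then have "h c = v" "h c' = v" "c \<noteq> a" "c' \<noteq> a" "c \<in> Q1" "c' \<in> Q1"
          using H \<open>t b' = v\<close> by (auto simp: is_path2_def levee_h_def levee_t_def split: if_splits)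
        then show ?thesis using three_le_card[of "{x\<in>Q1. h x = v}" a c c'] CH[OF vQ] aQ assms(5) by auto
      qed
    qed
  next
    fix b' c c' assume b': "b' \<in> Q1" and "(b', c) \<in> ?Z \<and> (b', c') \<in> ?Z"
    then show "c = c'" using G4[OF b'] by (auto simp: levee_Z_def)
  qed
  have r1: "\<not> relational (levee_Q0 Q0 v) Q1 ?h ?t ?Z Sharp"
    by (auto simp: relational_def levee_Z_def levee_t_def split: if_splits)
  have r2: "\<not> relational (levee_Q0 Q0 v) Q1 ?h ?t ?Z Flat"
    by (auto simp: relational_def levee_Z_def levee_t_def split: if_splits)
  show ?thesis using p1 p2 p3 p4 r1 r2 unfolding locally_gentle_def by blast
qed

end
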